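(* Let $|\psi\rangle$ be an $n$-qubit pure state and let $s\subseteq[n]$. Suppose that for every $X\in\mathcal{P}(s)$ with $X\neq\emptyset$ the subsystems $X$ and $X^c$ carry equispaced nondegenerate Hamiltonians $H_X=\sum_{j=0}^{d_X-1} j\,\epsilon^X|\epsilon_j^X\rangle\langle\epsilon_j^X|$ and $H_{X^c}=\sum_{j=0}^{d_{X^c}-1} j\,\epsilon^{X^c}|\epsilon_j^{X^c}\rangle\langle\epsilon_j^{X^c}|$ with $\epsilon^X,\epsilon^{X^c}>0$ and $d_X=\dim\mathcal{H}_X$, $d_{X^c}=\dim\mathcal{H}_{X^c}$, and the bipartite system $X|X^c$ carries $H_X\otimes\mathbb{I}+\mathbb{I}\otimes H_{X^c}$. Then $$M^{(s)}_B(|\psi\rangle)=2\,M^{(s)}_E(|\psi\rangle);$$ more precisely, $\Delta^{cg}_{X|X^c}(|\psi\rangle)=2\Delta_{X|X^c}(|\psi\rangle)$ for every such $X$.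
   Context: For a system with Hamiltonian $H=\sum_j\epsilon_j|\epsilon_j\rangle\langle\epsilon_j|$, eigenvalues ordered $\epsilon_0=0\le\epsilon_1\le\cdots\le\epsilon_{d-1}$, and a state $\rho$ with eigenvalues $p_0\ge p_1\ge\cdots\ge p_{d-1}$: the passive state is $\rho^p=\sum_j p_j|\epsilon_j\rangle\langle\epsilon_j|$ (minimal energy in the unitary orbit of $\rho$) and the active state is $\rho^{ac}=\sum_j p_{d-1-j}|\epsilon_j\rangle\langle\epsilon_j|$ (maximal energy in the unitary orbit). The battery capacity is $\mathcal{C}(\rho)=\mathrm{tr}(\rho^{ac}H)-\mathrm{tr}(\rho^pH)$. For an $n$-qubit pure state $|\psi\rangle$ and $X\subseteq[n]$, write $\rho_X=\mathrm{tr}_{X^c}|\psi\rangle\langle\psi|$ ($X^c=[n]\setminus X$). The ergotropic gap is $\Delta_{X|X^c}(|\psi\rangle)=\mathrm{tr}(\rho_X^pH_X)+\mathrm{tr}(\rho_{X^c}^pH_{X^c})$, and the battery capacity gap is $\Delta^{cg}_{X|X^c}(|\psi\rangle)=\mathcal{C}(|\psi\rangle\langle\psi|)-\mathcal{C}(\rho_X)-\mathcal{C}(\rho_{X^c})$, where $\mathcal{C}(|\psi\rangle\langle\psi|)$ is taken with respect to $H_X\otimes\mathbb{I}+\mathbb{I}\otimes H_{X^c}$; both gaps are set to $0$ when $X=\emptyset$ or $X=[n]$. $\mathcal{P}(s)$ is the power set of $s$. The ergotropic-gap concentratable entanglement is $M^{(s)}_E(|\psi\rangle)=2^{-|s|}\sum_{X\in\mathcal{P}(s)}\Delta_{X|X^c}(|\psi\rangle)$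 and the battery capacity-gap concentratable entanglement is $M^{(s)}_B(|\psi\rangle)=2^{-|s|}\sum_{X\in\mathcal{P}(s)}\Delta^{cg}_{X|X^c}(|\psi\rangle)$. *)

theory Defs
  imports "Jordan_Normal_Form.Schur_Decomposition" "HOL-Library.Multiset"
begin

(* Qubits are labelled 0..<n.  A computational-basis index k < 2^n assigns to
   qubit i the bit  odd (k div 2^i).  For a set X of qubits, an index a < 2^(card X)
   assigns to the m-th smallest element of X the bit  odd (a div 2^m). *)

definition qbit :: "nat \<Rightarrow> nat \<Rightarrow> nat" where
  "qbit k i = (if odd (k div 2 ^ i) then 1 else 0)"

definition restr :: "nat set \<Rightarrow> nat \<Rightarrow> nat" where
  "restr X k = (\<Sum>m<card X. qbit k (sorted_list_of_set X ! m) * 2 ^ m)"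

definition compl_q :: "nat \<Rightarrow> nat set \<Rightarrow> nat set" where
  "compl_q n X = {0..<n} - X"

definition pure_dm :: "complex vec \<Rightarrow> complex mat" where
  "pure_dm psi = mat (dim_vec psi) (dim_vec psi) (\<lambda>(k,l). psi $ k * cnj (psi $ l))"

(* reduced state rho_X = tr_{X^c} |psi><psi| of an n-qubit state *)
definition reduced :: "nat \<Rightarrow> complex vec \<Rightarrow> nat set \<Rightarrow> complex mat" where
  "reduced n psi X = mat (2 ^ card X) (2 ^ card X) (\<lambda>(a,b).
     \<Sum>k<2^n. \<Sum>l<2^n.
       (if restr X k = a \<and> restr X l = b \<and> restr (compl_q n X) k = restr (compl_q n X) l
        then psi $ k * cnj (psi $ l) else 0))"

(* H_X \<otimes> I + I \<otimes> H_{X^c} on the n-qubit space (computational ordering) *)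
definition kron_sum :: "nat \<Rightarrow> nat set \<Rightarrow> complex mat \<Rightarrow> complex mat \<Rightarrow> complex mat" where
  "kron_sum n X HA HB = mat (2 ^ n) (2 ^ n) (\<lambda>(k,l).
     (if restr (compl_q n X) k = restr (compl_q n X) l then HA $$ (restr X k, restr X l) else 0)
   + (if restr X k = restr X l then HB $$ (restr (compl_q n X) k, restr (compl_q n X) l) else 0))"

definition eigs :: "complex mat \<Rightarrow> real list" where
  "eigs A = sorted_list_of_multiset (image_mset Re (proots (char_poly A)))"

(* tr(rho^p H): p_j descending paired with eps_j ascending *)
definition passive_energy :: "complex mat \<Rightarrow> complex mat \<Rightarrow> real" where
  "passive_energy \<rho> H = (\<Sum>j<dim_row \<rho>. rev (eigs \<rho>) ! j * eigs H ! j)"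

(* tr(rho^ac H): p_{d-1-j} paired with eps_j *)
definition active_energy :: "complex mat \<Rightarrow> complex mat \<Rightarrow> real" where
  "active_energy \<rho> H = (\<Sum>j<dim_row \<rho>. eigs \<rho> ! j * eigs H ! j)"

definition battery_capacity :: "complex mat \<Rightarrow> complex mat \<Rightarrow> real" where
  "battery_capacity \<rho> H = active_energy \<rho> H - passive_energy \<rho> H"

(* ergotropic gap; HA X is H_X, HB X is H_{X^c} *)
definition ergo_gap :: "nat \<Rightarrow> complex vec \<Rightarrow> (nat set \<Rightarrow> complex mat) \<Rightarrow> (nat set \<Rightarrow> complex mat)
   \<Rightarrow> nat set \<Rightarrow> real" where
  "ergo_gap n psi HA HB X = (if X = {} \<or> X = {0..<n} then 0 else
     passive_energy (reduced n psi X) (HA X)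
   + passive_energy (reduced n psi (compl_q n X)) (HB X))"

definition cap_gap :: "nat \<Rightarrow> complex vec \<Rightarrow> (nat set \<Rightarrow> complex mat) \<Rightarrow> (nat set \<Rightarrow> complex mat)
   \<Rightarrow> nat set \<Rightarrow> real" where
  "cap_gap n psi HA HB X = (if X = {} \<or> X = {0..<n} then 0 else
     battery_capacity (pure_dm psi) (kron_sum n X (HA X) (HB X))
   - battery_capacity (reduced n psi X) (HA X)
   - battery_capacity (reduced n psi (compl_q n X)) (HB X))"

definition M_E :: "nat \<Rightarrow> complex vec \<Rightarrow> (nat set \<Rightarrow> complex mat) \<Rightarrow> (nat set \<Rightarrow> complex mat)
   \<Rightarrow> nat set \<Rightarrow> real" where
  "M_E n psi HA HB s = (\<Sum>X\<in>Pow s. ergo_gap n psi HA HB X) / 2 ^ card s"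

definition M_B :: "nat \<Rightarrow> complex vec \<Rightarrow> (nat set \<Rightarrow> complex mat) \<Rightarrow> (nat set \<Rightarrow> complex mat)
   \<Rightarrow> nat set \<Rightarrow> real" where
  "M_B n psi HA HB s = (\<Sum>X\<in>Pow s. cap_gap n psi HA HB X) / 2 ^ card s"

definition unitary_mat :: "nat \<Rightarrow> complex mat \<Rightarrow> bool" where
  "unitary_mat d U \<longleftrightarrow> U \<in> carrier_mat d d \<and> U * mat_adjoint U = 1\<^sub>m d"

(* H = sum_j j*e |e_j><e_j| for an orthonormal basis (e_j), i.e. H = U diag(0,e,2e,...) U^dagger *)
definition equispaced_ham :: "nat \<Rightarrow> real \<Rightarrow> complex mat \<Rightarrow> bool" where
  "equispaced_ham d e H \<longleftrightarrow> (\<exists>U. unitary_mat d U \<and>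
     H = U * mat d d (\<lambda>(i,j). if i = j then complex_of_real (real i * e) else 0) * mat_adjoint U)"

end

theory Submission
  imports Defs
begin


lemma digits_bound:
  fixes b :: "nat \<Rightarrow> nat"
  assumes "\<And>m. m < N \<Longrightarrow> b m \<le> 1"
  shows "(\<Sum>m<N. b m * 2^m) < 2^N"
  using assms
proof (induction N)
  case 0 then show ?case by simp
next
  case (Suc N)
  have "(\<Sum>m<N. b m * 2^m) < 2^N" using Suc by auto
  moreover have "b N * 2^N \<le> 2^N" using Suc.prems[of N] by simp
  ultimately have "(\<Sum>m<N. b m * 2^m) + b N * 2^N < 2^N + 2^N" by linarith
  then show ?case by simp
qed

lemma digits_odd:
  fixes b :: "nat \<Rightarrow> nat"
  assumes "\<And>m. m < N \<Longrightarrow> b m \<le> 1" and "j < N"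
  shows "odd ((\<Sum>m<N. b m * 2^m) div 2^j) \<longleftrightarrow> b j = 1"
  using assms
proof (induction N)
  case 0 then show ?case by simp
next
  case (Suc N)
  define S where "S = (\<Sum>m<N. b m * 2^m)"
  have Sb: "S < 2^N" unfolding S_def using Suc.prems by (intro digits_bound) auto
  have eq: "(\<Sum>m<Suc N. b m * 2^m) = S + b N * 2^N" unfolding S_def by simp
  show ?case
  proof (cases "j = N")
    case True
    have "(S + b N * 2^N) div 2^N = S div 2^N + b N" by simp
    also have "S div 2^N = 0" using Sb by simp
    finally show ?thesis using eq True Suc.prems(1)[of N]
      by (cases "b N") auto
  next
    case False
    then have jN: "j < N" using Suc.prems by simp
    have p: "(2::nat)^N = 2^(N-j) * 2^j" using jN by (simp add: power_add[symmetric])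
    have "(S + b N * 2^N) div 2^j = S div 2^j + b N * 2^(N-j)"
    proof -
      have e1: "S + b N * 2^N = S + (b N * 2^(N-j)) * 2^j" unfolding p by (simp add: mult.assoc)
      have e2: "(S + (b N * 2^(N-j)) * 2^j) div 2^j = S div 2^j + b N * 2^(N-j)" by simp
      show ?thesis unfolding e1 by (rule e2)
    qed
    moreover have "even (b N * 2^(N-j))" using jN by simp
    ultimately have "odd ((S + b N * 2^N) div 2^j) \<longleftrightarrow> odd (S div 2^j)" by simp
    then show ?thesis using Suc.IH[OF _ jN] Suc.prems(1) eq S_def by simp
  qed
qed

lemma qbit_le: "qbit k i \<le> 1" unfolding qbit_def by simp

lemma restr_bound: "restr X k < 2 ^ card X"
  unfolding restr_def by (rule digits_bound) (metis One_nat_def qbit_le)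

lemma restr_odd:
  assumes "m < card X"
  shows "odd (restr X k div 2^m) \<longleftrightarrow> odd (k div 2 ^ (sorted_list_of_set X ! m))"
  unfolding restr_def using digits_odd[of "card X" "\<lambda>m. qbit k (sorted_list_of_set X ! m)" m] assms
  by (simp add: qbit_le qbit_def)

lemma restr_bit_eq:
  assumes "restr X k = restr X l" "i \<in> X" "finite X"
  shows "odd (k div 2^i) \<longleftrightarrow> odd (l div 2^i)"
proof -
  have "i \<in> set (sorted_list_of_set X)" using assms by simp
  then obtain m where m: "m < length (sorted_list_of_set X)" "sorted_list_of_set X ! m = i"
    by (metis in_set_conv_nth)
  then have mc: "m < card X" by simp
  show ?thesis using restr_odd[OF mc, of k] restr_odd[OF mc, of l] m assms(1) by simp
qed

lemma restr_inj:
  assumes "X \<subseteq> {0..<n}" "k < 2^n" "l < 2^n"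
    "restr X k = restr X l" "restr (compl_q n X) k = restr (compl_q n X) l"
  shows "k = l"
proof (rule bit_eqI)
  fix i
  show "bit k i = bit l i"
  proof (cases "i < n")
    case True
    show ?thesis
    proof (cases "i \<in> X")
      case True
      then show ?thesis using restr_bit_eq[OF assms(4) True] assms(1) finite_subset
        by (auto simp: bit_nat_def)
    next
      case False
      then have "i \<in> compl_q n X" using \<open>i < n\<close> by (simp add: compl_q_def)
      then show ?thesis using restr_bit_eq[OF assms(5)] by (auto simp: bit_nat_def compl_q_def)
    qed
  next
    case False
    then have "(2::nat)^n \<le> 2^i" by simp
    then have "k div 2^i = 0" "l div 2^i = 0" using assms(2,3)
      by (metis div_less less_le_trans)+
    then show ?thesis by (simp add: bit_nat_def)
  qed
qed

lemma card_compl: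
  assumes "X \<subseteq> {0..<n}"
  shows "card X + card (compl_q n X) = n"
  using assms unfolding compl_q_def
  by (metis card_Diff_subset card_atLeastLessThan diff_zero finite_atLeastLessThan finite_subset le_add_diff_inverse card_mono)

lemma restr_bij:
  assumes "X \<subseteq> {0..<n}"
  shows "bij_betw (\<lambda>k. (restr X k, restr (compl_q n X) k)) {..<2^n}
           ({..<2^card X} \<times> {..<2^card (compl_q n X)})"
proof -
  let ?f = "\<lambda>k. (restr X k, restr (compl_q n X) k)"
  have inj: "inj_on ?f {..<2^n}"
    by (intro inj_onI) (use restr_inj[OF assms] in auto)
  have sub: "?f ` {..<2^n} \<subseteq> {..<2^card X} \<times> {..<2^card (compl_q n X)}"
    using restr_bound by auto
  have "card (?f ` {..<2^n}) = 2^n" using card_image[OF inj] by simp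
  also have "\<dots> = card ({..<(2::nat)^card X} \<times> {..<(2::nat)^card (compl_q n X)})"
    using card_compl[OF assms] by (simp add: card_cartesian_product power_add[symmetric])
  finally have "?f ` {..<2^n} = {..<2^card X} \<times> {..<2^card (compl_q n X)}"
    using sub by (intro card_subset_eq) auto
  then show ?thesis using inj unfolding bij_betw_def by simp
qed


lemma adj_carrier: "W \<in> carrier_mat d d \<Longrightarrow> mat_adjoint W \<in> carrier_mat d d"
  unfolding mat_adjoint_def by (auto simp: mat_of_rows_def)

lemma adj_index: "W \<in> carrier_mat d d \<Longrightarrow> i < d \<Longrightarrow> j < d \<Longrightarrow>
   mat_adjoint W $$ (i,j) = cnj (W $$ (j,i))"
  unfolding mat_adjoint_def by (auto simp: mat_of_rows_def)

lemma proots_lin: "proots (\<Prod>a\<leftarrow>as. [:- a, 1:]) = mset (as :: complex list)"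
proof (induction as)
  case Nil then show ?case by simp
next
  case (Cons a as)
  have nz: "(\<Prod>a\<leftarrow>as. [:- a, 1:]) \<noteq> (0 :: complex poly)"
    by (auto simp: prod_list_zero_iff)
  have "(\<Prod>a\<leftarrow>a#as. [:- a, 1:]) = [:- a, 1:] * (\<Prod>a\<leftarrow>as. [:- a, 1:])" by simp
  also have "proots \<dots> = proots [:- a, 1:] + proots (\<Prod>a\<leftarrow>as. [:- a, 1:])"
    using nz by (intro proots_mult) auto
  finally show ?case using Cons proots_linear_factor[of "-a"] by simp
qed

definition mtrace :: "complex mat \<Rightarrow> complex" where
  "mtrace A = (\<Sum>i<dim_row A. A $$ (i,i))"

lemma mtrace_mult:
  assumes "A \<in> carrier_mat n m" "B \<in> carrier_mat m n"
  shows "mtrace (A * B) = (\<Sum>i<n. \<Sum>k<m. A $$ (i,k) * B $$ (k,i))"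
proof -
  have e1: "(A*B) $$ (i,i) = (\<Sum>k<m. A$$(i,k) * B$$(k,i))" if "i < n" for i
    using assms that by (simp add: scalar_prod_def atLeast0LessThan)
  have "dim_row (A * B) = n" using assms by simp
  then show ?thesis unfolding mtrace_def by (intro sum.cong) (simp_all add: e1)
qed

lemma mtrace_comm:
  assumes "A \<in> carrier_mat n m" "B \<in> carrier_mat m n"
  shows "mtrace (A * B) = mtrace (B * A)"
proof -
  have "mtrace (A * B) = (\<Sum>i<n. \<Sum>k<m. A $$ (i,k) * B $$ (k,i))"
    by (rule mtrace_mult[OF assms])
  also have "\<dots> = (\<Sum>k<m. \<Sum>i<n. B $$ (k,i) * A $$ (i,k))"
    by (subst sum.swap) (simp add: mult.commute)
  also have "\<dots> = mtrace (B * A)"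
    by (rule mtrace_mult[OF assms(2,1), symmetric])
  finally show ?thesis .
qed

lemma similar_mtrace:
  assumes "similar_mat A B"
  shows "mtrace A = mtrace B"
proof -
  from similar_matD[OF assms] obtain n P Q where
    c: "{A,B,P,Q} \<subseteq> carrier_mat n n" and QP: "Q * P = 1\<^sub>m n" and AB: "A = P * B * Q" by blast
  have "mtrace A = mtrace (P * (B * Q))" using AB c by (simp add: assoc_mult_mat[of P n n B n Q n])
  also have "\<dots> = mtrace ((B * Q) * P)" using c by (intro mtrace_comm) auto
  also have "\<dots> = mtrace (B * (Q * P))" using c by (simp add: assoc_mult_mat[of B n n Q n P n])
  also have "\<dots> = mtrace B" using QP c right_mult_one_mat[of B n n] by auto
  finally show ?thesis .
qed

lemma char_poly_spec:
  fixes A :: "complex mat"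
  assumes A: "A \<in> carrier_mat d d"
  shows "\<exists>as. proots (char_poly A) = mset as \<and> length as = d \<and> sum_list as = mtrace A"
proof -
  obtain es where es: "char_poly A = (\<Prod>a\<leftarrow>es. [:- a, 1:])" "length es = d"
    using char_poly_factorized[OF A] by blast
  obtain B where B: "B \<in> carrier_mat d d" "upper_triangular B" "similar_mat A B"
    using schur_upper_triangular[OF A es(1)] by blast
  have cp: "char_poly A = (\<Prod>a\<leftarrow>diag_mat B. [:- a, 1:])"
    using char_poly_similar[OF B(3)] char_poly_upper_triangular[OF B(1,2)] by simp
  have "sum_list (diag_mat B) = mtrace B"
    unfolding diag_mat_def mtrace_def by (simp add: sum_list_sum_nth atLeast0LessThan)
  moreover have "proots (char_poly A) = mset (diag_mat B)" unfolding cp by (rule proots_lin)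
  moreover have "length (diag_mat B) = d" using B by (simp add: diag_mat_def)
  ultimately show ?thesis using similar_mtrace[OF B(3)] by metis
qed

lemma eigs_spec:
  fixes A :: "complex mat"
  assumes A: "A \<in> carrier_mat d d"
  shows "\<exists>as. eigs A = sort (map Re as) \<and> length as = d \<and> sum_list as = mtrace A
            \<and> (\<forall>a\<in>set as. poly (char_poly A) a = 0)"
proof -
  obtain as where as: "proots (char_poly A) = mset as" "length as = d" "sum_list as = mtrace A"
    using char_poly_spec[OF A] by blast
  have nz: "char_poly A \<noteq> 0" using degree_monic_char_poly[OF A] by auto
  have "\<forall>a\<in>set as. poly (char_poly A) a = 0"
  proof
    fix a assume "a \<in> set as"
    then have "a \<in># proots (char_poly A)" using as by simp
    then show "poly (char_poly A) a = 0" using nz by simp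
  qed
  moreover have "eigs A = sort (map Re as)"
    unfolding eigs_def as(1) mset_map[symmetric] sorted_list_of_multiset_mset ..
  ultimately show ?thesis using as by blast
qed

lemma eigs_length: "A \<in> carrier_mat d d \<Longrightarrow> length (eigs A) = d"
proof -
  assume A: "A \<in> carrier_mat d d"
  obtain as where "eigs A = sort (map Re as)" "length as = d" using eigs_spec[OF A] by blast
  then show ?thesis by simp
qed

lemma eigs_sum: "A \<in> carrier_mat d d \<Longrightarrow> sum_list (eigs A) = Re (mtrace A)"
proof -
  assume A: "A \<in> carrier_mat d d"
  obtain as where as: "eigs A = sort (map Re as)" "sum_list as = mtrace A"
    using eigs_spec[OF A] by blast
  have "sum_list (sort (map Re as)) = sum_list (map Re as)"
    by (metis mset_sort sum_mset_sum_list)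
  also have "\<dots> = Re (sum_list as)" by (induction as) auto
  finally show ?thesis using as by simp
qed

lemma eigs_diag_similar:
  fixes W :: "complex mat" and f :: "nat \<Rightarrow> real"
  assumes W: "W \<in> carrier_mat d d" and WW: "W * mat_adjoint W = 1\<^sub>m d"
    and H: "H = W * mat d d (\<lambda>(i,j). if i = j then complex_of_real (f i) else 0) * mat_adjoint W"
  shows "eigs H = sort (map f [0..<d])"
proof -
  define D where "D = mat d d (\<lambda>(i,j). if i = j then complex_of_real (f i) else 0)"
  have D: "D \<in> carrier_mat d d" unfolding D_def by simp
  have Wa: "mat_adjoint W \<in> carrier_mat d d" using adj_carrier[OF W] .
  have WW': "mat_adjoint W * W = 1\<^sub>m d" using mat_mult_left_right_inverse[OF W Wa WW] .
  have Heq: "H = W * D * mat_adjoint W" using H D_def by simp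
  have Hc: "H \<in> carrier_mat d d" unfolding Heq using W Wa D by (meson mult_carrier_mat)
  have "similar_mat H D"
    by (rule similar_matI[of H D W "mat_adjoint W" d]) (use Hc D W Wa WW WW' Heq in auto)
  then have "char_poly H = char_poly D" by (rule char_poly_similar)
  also have "\<dots> = (\<Prod>a\<leftarrow>diag_mat D. [:- a, 1:])"
    by (rule char_poly_upper_triangular[OF D]) (simp add: D_def upper_triangular_def)
  finally have "proots (char_poly H) = mset (diag_mat D)" by (simp add: proots_lin)
  moreover have "diag_mat D = map (\<lambda>i. complex_of_real (f i)) [0..<d]"
    unfolding diag_mat_def D_def by simp
  ultimately show ?thesis unfolding eigs_def by (simp flip: mset_map add: comp_def)
qed

lemma compl_compl: "X \<subseteq> {0..<n} \<Longrightarrow> compl_q n (compl_q n X) = X"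
  unfolding compl_q_def by auto

lemma compl_sub: "compl_q n X \<subseteq> {0..<n}"
  unfolding compl_q_def by auto

lemma reduced_carrier: "reduced n psi X \<in> carrier_mat (2^card X) (2^card X)"
  unfolding reduced_def by simp

lemma cnj_sq: "z * cnj z = complex_of_real ((cmod z)^2)"
  by (metis complex_norm_square of_real_power)

lemma reduced_trace:
  assumes X: "X \<subseteq> {0..<n}"
  shows "mtrace (reduced n psi X) = (\<Sum>k<2^n. complex_of_real ((cmod (psi $ k))^2))"
proof -
  let ?C = "compl_q n X"
  let ?T = "\<lambda>a k l. (if restr X k = a \<and> restr X l = a \<and> restr ?C k = restr ?C l
        then psi $ k * cnj (psi $ l) else 0)"
  have "mtrace (reduced n psi X) = (\<Sum>a<2^card X. \<Sum>k<2^n. \<Sum>l<2^n. ?T a k l)"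
    unfolding mtrace_def reduced_def by simp
  also have "\<dots> = (\<Sum>k<2^n. \<Sum>l<2^n. \<Sum>a<2^card X. ?T a k l)"
    by (simp add: sum.swap[of _ "{..<2^card X}"])
  also have "\<dots> = (\<Sum>k<2^n. \<Sum>l<2^n. if l = k then psi $ k * cnj (psi $ l) else 0)"
  proof (intro sum.cong refl)
    fix k l assume k: "k \<in> {..<(2::nat)^n}" and l: "l \<in> {..<(2::nat)^n}"
    have "(\<Sum>a<2^card X. ?T a k l) = (\<Sum>a<2^card X. if a = restr X k then
        (if restr X l = restr X k \<and> restr ?C k = restr ?C l then psi $ k * cnj (psi $ l) else 0) else 0)"
      by (intro sum.cong) auto
    also have "\<dots> = (if restr X l = restr X k \<and> restr ?C k = restr ?C l then psi $ k * cnj (psi $ l) else 0)"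
      using restr_bound[of X k] by (simp add: sum.delta')
    also have "\<dots> = (if l = k then psi $ k * cnj (psi $ l) else 0)"
      using restr_inj[OF X, of k l] k l by auto
    finally show "(\<Sum>a<2^card X. ?T a k l) = (if l = k then psi $ k * cnj (psi $ l) else 0)" .
  qed
  also have "\<dots> = (\<Sum>k<2^n. psi $ k * cnj (psi $ k))"
    by (intro sum.cong refl) (simp add: sum.delta')
  also have "\<dots> = (\<Sum>k<2^n. complex_of_real ((cmod (psi $ k))^2))"
    by (simp add: cnj_sq)
  finally show ?thesis .
qed

lemma reduced_trace_one:
  assumes X: "X \<subseteq> {0..<n}" and nrm: "(\<Sum>k<2^n. (cmod (psi $ k))\<^sup>2) = 1"
  shows "sum_list (eigs (reduced n psi X)) = 1"
  using eigs_sum[OF reduced_carrier] reduced_trace[OF X] nrm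
  by (metis Re_complex_of_real of_real_sum)

lemma sorted_lin: "e \<ge> 0 \<Longrightarrow> sort (map (\<lambda>i. real i * e) [0..<d]) = map (\<lambda>i. real i * e) [0..<d]"
  by (rule sorted_sort_id) (auto simp: sorted_iff_nth_mono intro: mult_right_mono)

lemma capacity_formula:
  assumes rho: "rho \<in> carrier_mat d d" and tr: "sum_list (eigs rho) = 1"
    and H: "eigs H = map (\<lambda>i. real i * e) [0..<d]"
  shows "battery_capacity rho H = e * (real d - 1) - 2 * passive_energy rho H"
proof -
  define L where "L = eigs rho"
  have len: "length L = d" unfolding L_def using eigs_length[OF rho] .
  have dr: "dim_row rho = d" using rho by simp
  have s1: "(\<Sum>j<d. L ! j) = 1" using tr len unfolding L_def[symmetric]
    by (simp add: sum_list_sum_nth atLeast0LessThan)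
  define A where "A = (\<Sum>j<d. L ! j * (real j * e))"
  define P where "P = (\<Sum>j<d. L ! j * ((real d - 1 - real j) * e))"
  have act: "active_energy rho H = A"
    unfolding active_energy_def A_def dr H L_def[symmetric] by (intro sum.cong) auto
  have "passive_energy rho H = (\<Sum>j<d. L ! (d - Suc j) * (real j * e))"
    unfolding passive_energy_def dr H L_def[symmetric] by (intro sum.cong) (auto simp: rev_nth len)
  also have "\<dots> = (\<Sum>j<d. L ! (d - Suc j) * ((real d - 1 - real (d - Suc j)) * e))"
    by (intro sum.cong) (auto simp: of_nat_diff)
  also have "\<dots> = P" unfolding P_def by (rule sum.nat_diff_reindex)
  finally have pas: "passive_energy rho H = P" .
  have "A + P = (\<Sum>j<d. L ! j * ((real d - 1) * e))"
    unfolding A_def P_def sum.distrib[symmetric] by (intro sum.cong) (auto simp: algebra_simps)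
  also have "\<dots> = (real d - 1) * e" using s1 by (simp add: sum_distrib_right[symmetric])
  finally have "A + P = (real d - 1) * e" .
  then show ?thesis unfolding battery_capacity_def act pas by (simp add: algebra_simps)
qed

lemma pure_carrier: "dim_vec psi = N \<Longrightarrow> pure_dm psi \<in> carrier_mat N N"
  unfolding pure_dm_def by simp

lemma pure_idem:
  assumes d: "dim_vec psi = N" and nrm: "(\<Sum>k<N. (cmod (psi $ k))\<^sup>2) = 1"
  shows "pure_dm psi * pure_dm psi = pure_dm psi"
proof -
  have s: "(\<Sum>m<N. cnj (psi $ m) * psi $ m) = 1"
  proof -
    have "(\<Sum>m<N. cnj (psi $ m) * psi $ m) = (\<Sum>m<N. complex_of_real ((cmod (psi $ m))\<^sup>2))"
      by (intro sum.cong refl) (metis cnj_sq mult.commute)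
    also have "\<dots> = 1" using nrm by (metis of_real_1 of_real_sum)
    finally show ?thesis .
  qed
  show ?thesis
  proof (rule eq_matI)
    fix k l assume k: "k < dim_row (pure_dm psi)" and l: "l < dim_col (pure_dm psi)"
    then have kl: "k < N" "l < N" using d by (auto simp: pure_dm_def)
    have "(pure_dm psi * pure_dm psi) $$ (k,l) = (\<Sum>m<N. psi $ k * cnj (psi $ m) * (psi $ m * cnj (psi $ l)))"
      using kl d by (simp add: pure_dm_def scalar_prod_def atLeast0LessThan)
    also have "\<dots> = psi $ k * cnj (psi $ l) * (\<Sum>m<N. cnj (psi $ m) * psi $ m)"
      by (simp add: sum_distrib_left algebra_simps)
    also have "\<dots> = pure_dm psi $$ (k,l)" using s kl d by (simp add: pure_dm_def)
    finally show "(pure_dm psi * pure_dm psi) $$ (k,l) = pure_dm psi $$ (k,l)" .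
  qed (auto simp: pure_dm_def)
qed

lemma idem_root:
  fixes P :: "complex mat"
  assumes P: "P \<in> carrier_mat N N" and idem: "P * P = P" and r: "poly (char_poly P) a = 0"
  shows "a = 0 \<or> a = 1"
proof -
  have "eigenvalue P a" using eigenvalue_root_char_poly[OF P] r by simp
  then obtain v where v: "v \<in> carrier_vec N" "v \<noteq> 0\<^sub>v N" "P *\<^sub>v v = a \<cdot>\<^sub>v v"
    unfolding eigenvalue_def eigenvector_def using P by auto
  have "P *\<^sub>v (P *\<^sub>v v) = (P * P) *\<^sub>v v"
    by (rule assoc_mult_mat_vec[symmetric]) (use P v in auto)
  also have "\<dots> = a \<cdot>\<^sub>v v" using idem v(3) by simp
  finally have e1: "P *\<^sub>v (P *\<^sub>v v) = a \<cdot>\<^sub>v v" .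
  have "P *\<^sub>v (P *\<^sub>v v) = P *\<^sub>v (a \<cdot>\<^sub>v v)" using v(3) by simp
  also have "\<dots> = a \<cdot>\<^sub>v (P *\<^sub>v v)" by (rule mult_mat_vec) (use P v in auto)
  also have "\<dots> = a \<cdot>\<^sub>v (a \<cdot>\<^sub>v v)" using v(3) by simp
  finally have e2: "a \<cdot>\<^sub>v (a \<cdot>\<^sub>v v) = a \<cdot>\<^sub>v v" using e1 by simp
  have "\<exists>i<N. v $ i \<noteq> 0"
  proof (rule ccontr)
    assume "\<not> (\<exists>i<N. v $ i \<noteq> 0)"
    then have "v = 0\<^sub>v N" using v(1) by (intro eq_vecI) auto
    with v(2) show False by simp
  qed
  then obtain i where i: "i < N" "v $ i \<noteq> 0" by blast
  have "(a \<cdot>\<^sub>v (a \<cdot>\<^sub>v v)) $ i = (a \<cdot>\<^sub>v v) $ i" using e2 by simp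
  then have "a * (a * v $ i) = a * v $ i" using i v(1) by simp
  then have "(a * a - a) * v $ i = 0" by (simp add: algebra_simps)
  then have "a * a = a" using i by simp
  then show ?thesis by (metis mult_cancel_left2 mult_eq_0_iff) 
qed

lemma pure_eigs:
  assumes d: "dim_vec psi = N" and nrm: "(\<Sum>k<N. (cmod (psi $ k))\<^sup>2) = 1" and j: "j < N"
  shows "eigs (pure_dm psi) ! j = (if j = N - 1 then 1 else 0)"
proof -
  let ?P = "pure_dm psi"
  have P: "?P \<in> carrier_mat N N" using pure_carrier[OF d] .
  obtain as where as: "eigs ?P = sort (map Re as)" "length as = N" "sum_list as = mtrace ?P"
     "\<forall>a\<in>set as. poly (char_poly ?P) a = 0"
    using eigs_spec[OF P] by blast
  define L where "L = eigs ?P"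
  have len: "length L = N" using as L_def by simp
  have sorted: "sorted L" using as L_def by simp
  have vals: "\<forall>x\<in>set L. x = 0 \<or> x = 1"
  proof
    fix x assume "x \<in> set L"
    then obtain a where a: "a \<in> set as" "x = Re a" using as L_def by auto
    have "poly (char_poly ?P) a = 0" using as(4) a(1) by blast
    then have "a = 0 \<or> a = 1" by (rule idem_root[OF P pure_idem[OF d nrm]])
    then show "x = 0 \<or> x = 1" using a(2) by auto
  qed
  have vi: "L ! i = 0 \<or> L ! i = 1" if "i < N" for i using vals len that by (metis nth_mem)
  have tr: "mtrace ?P = (\<Sum>k<N. complex_of_real ((cmod (psi $ k))\<^sup>2))"
    unfolding mtrace_def using d by (intro sum.cong) (auto simp: pure_dm_def cnj_sq)
  have "sum_list L = 1" unfolding L_def eigs_sum[OF P] tr using nrm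
    by (metis Re_complex_of_real of_real_sum)
  then have s: "(\<Sum>i<N. L ! i) = 1" using len by (simp add: sum_list_sum_nth atLeast0LessThan)
  have N0: "N > 0" using j by simp
  have top: "L ! (N - 1) = 1"
  proof (rule ccontr)
    assume "L ! (N - 1) \<noteq> 1"
    then have z: "L ! (N - 1) = 0" using vi[of "N - 1"] N0 by auto
    have "L ! i = 0" if "i < N" for i
    proof -
      have "L ! i \<le> L ! (N - 1)" using sorted len that by (intro sorted_nth_mono) auto
      then show ?thesis using z vi[OF that] by auto
    qed
    then have "\<forall>i<N. L ! i = 0" by blast
    then have "(\<Sum>i<N. L ! i) = 0" by simp
    then show False using s by simp
  qed
  have low: "L ! i = 0" if "i < N - 1" for i
  proof (rule ccontr)
    assume "L ! i \<noteq> 0"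
    then have "L ! i = 1" using vi[of i] that by auto
    have nn: "\<forall>x\<in>{..<N} - {i, N - 1}. 0 \<le> L ! x" using vi by force
    have "(\<Sum>x\<in>{i, N - 1}. L ! x) \<le> (\<Sum>x<N. L ! x)"
      by (rule sum_mono2) (use that nn in auto)
    moreover have "(\<Sum>x\<in>{i, N - 1}. L ! x) = L ! i + L ! (N - 1)" using that by simp
    ultimately have "2 \<le> (\<Sum>i<N. L ! i)" using top \<open>L ! i = 1\<close> by simp
    then show False using s by simp
  qed
  show ?thesis using top low j unfolding L_def[symmetric] by auto
qed

lemma pure_capacity:
  assumes d: "dim_vec psi = N" and nrm: "(\<Sum>k<N. (cmod (psi $ k))\<^sup>2) = 1" and N0: "N > 0"
  shows "battery_capacity (pure_dm psi) K = eigs K ! (N - 1) - eigs K ! 0"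
proof -
  have dr: "dim_row (pure_dm psi) = N" using d by (simp add: pure_dm_def)
  have len: "length (eigs (pure_dm psi)) = N" using eigs_length[OF pure_carrier[OF d]] .
  have "active_energy (pure_dm psi) K = (\<Sum>j<N. if j = N - 1 then eigs K ! j else 0)"
    unfolding active_energy_def dr by (intro sum.cong) (auto simp: pure_eigs[OF d nrm])
  also have "\<dots> = eigs K ! (N - 1)" using N0 by simp
  finally have a: "active_energy (pure_dm psi) K = eigs K ! (N - 1)" .
  have "passive_energy (pure_dm psi) K = (\<Sum>j<N. if j = 0 then eigs K ! j else 0)"
    unfolding passive_energy_def dr
    by (intro sum.cong) (auto simp: rev_nth len pure_eigs[OF d nrm])
  also have "\<dots> = eigs K ! 0" using N0 by simp
  finally have p: "passive_energy (pure_dm psi) K = eigs K ! 0" .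
  show ?thesis unfolding battery_capacity_def a p ..
qed

lemma mult_adj_entry:
  assumes W: "W \<in> carrier_mat d d" and V: "V \<in> carrier_mat d d" and ij: "i < d" "j < d"
  shows "(W * mat_adjoint V) $$ (i,j) = (\<Sum>m<d. W $$ (i,m) * cnj (V $$ (j,m)))"
proof -
  have Va: "mat_adjoint V \<in> carrier_mat d d" using adj_carrier[OF V] .
  have "(W * mat_adjoint V) $$ (i,j) = (\<Sum>m<d. W $$ (i,m) * mat_adjoint V $$ (m,j))"
    using W Va ij by (simp add: scalar_prod_def atLeast0LessThan)
  also have "\<dots> = (\<Sum>m<d. W $$ (i,m) * cnj (V $$ (j,m)))"
    using adj_index[OF V] ij by (intro sum.cong) auto
  finally show ?thesis .
qed

lemma diag_entry:
  assumes W: "W \<in> carrier_mat d d" and im: "i < d" "m < d"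
  shows "(W * mat d d (\<lambda>(i,j). if i = j then complex_of_real (f i) else 0)) $$ (i,m)
     = W $$ (i,m) * complex_of_real (f m)"
proof -
  have "(W * mat d d (\<lambda>(i,j). if i = j then complex_of_real (f i) else 0)) $$ (i,m)
      = (\<Sum>k<d. W $$ (i,k) * (if k = m then complex_of_real (f k) else 0))"
    using W im by (simp add: scalar_prod_def atLeast0LessThan)
  also have "\<dots> = (\<Sum>k<d. if k = m then W $$ (i,k) * complex_of_real (f k) else 0)"
    by (intro sum.cong) auto
  also have "\<dots> = W $$ (i,m) * complex_of_real (f m)" using im by simp
  finally show ?thesis .
qed

lemma sandwich_entry:
  assumes W: "W \<in> carrier_mat d d" and V: "V \<in> carrier_mat d d" and ij: "i < d" "j < d"
  shows "(W * mat d d (\<lambda>(i,j). if i = j then complex_of_real (f i) else 0) * mat_adjoint V) $$ (i,j)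
     = (\<Sum>m<d. W $$ (i,m) * complex_of_real (f m) * cnj (V $$ (j,m)))"
proof -
  let ?D = "mat d d (\<lambda>(i,j). if i = j then complex_of_real (f i) else 0)"
  have WD: "W * ?D \<in> carrier_mat d d" using W by simp
  show ?thesis unfolding mult_adj_entry[OF WD V ij]
    using diag_entry[OF W ij(1)] by (intro sum.cong) auto
qed

lemma unitary_entries:
  assumes U: "U \<in> carrier_mat d d" and UU: "U * mat_adjoint U = 1\<^sub>m d" and ij: "i < d" "j < d"
  shows "(\<Sum>m<d. U $$ (i,m) * cnj (U $$ (j,m))) = (if i = j then 1 else 0)"
  using mult_adj_entry[OF U U ij] UU ij by simp

lemma restr_reindex:
  assumes X: "X \<subseteq> {0..<n}"
  shows "(\<Sum>m<2^n. g (restr X m) (restr (compl_q n X) m))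
       = (\<Sum>a<2^card X. \<Sum>b<2^card (compl_q n X). g a b)"
proof -
  have "(\<Sum>m<2^n. g (restr X m) (restr (compl_q n X) m))
      = (\<Sum>m<2^n. (\<lambda>(a,b). g a b) (restr X m, restr (compl_q n X) m))" by simp
  also have "\<dots> = (\<Sum>p\<in>{..<2^card X} \<times> {..<2^card (compl_q n X)}. (\<lambda>(a,b). g a b) p)"
    by (rule sum.reindex_bij_betw[OF restr_bij[OF X]])
  also have "\<dots> = (\<Sum>a<2^card X. \<Sum>b<2^card (compl_q n X). g a b)"
    by (simp add: sum.cartesian_product)
  finally show ?thesis .
qed


lemma kron_decomp:
  fixes UA UB :: "complex mat" and eA eB :: real
  assumes X: "X \<subseteq> {0..<n}"
    and UA: "UA \<in> carrier_mat (2^card X) (2^card X)" "UA * mat_adjoint UA = 1\<^sub>m (2^card X)"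
    and UB: "UB \<in> carrier_mat (2^card (compl_q n X)) (2^card (compl_q n X))"
            "UB * mat_adjoint UB = 1\<^sub>m (2^card (compl_q n X))"
    and HA: "HA = UA * mat (2^card X) (2^card X) (\<lambda>(i,j). if i = j then complex_of_real (real i * eA) else 0) * mat_adjoint UA"
    and HB: "HB = UB * mat (2^card (compl_q n X)) (2^card (compl_q n X)) (\<lambda>(i,j). if i = j then complex_of_real (real i * eB) else 0) * mat_adjoint UB"
    and W: "W = mat (2^n) (2^n) (\<lambda>(k,m). UA $$ (restr X k, restr X m) * UB $$ (restr (compl_q n X) k, restr (compl_q n X) m))"
  shows "W * mat_adjoint W = 1\<^sub>m (2^n)"
    and "kron_sum n X HA HB = W * mat (2^n) (2^n) (\<lambda>(i,j). if i = j then complex_of_real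
            (real (restr X i) * eA + real (restr (compl_q n X) i) * eB) else 0) * mat_adjoint W"
proof -
  let ?C = "compl_q n X"
  let ?a = "restr X" and ?c = "restr (compl_q n X)"
  let ?dA = "2^card X :: nat" and ?dB = "2^card (compl_q n X) :: nat" and ?N = "2^n :: nat"
  have Wc: "W \<in> carrier_mat ?N ?N" using W by simp
  have Wi: "W $$ (k,m) = UA $$ (?a k, ?a m) * UB $$ (?c k, ?c m)" if "k < ?N" "m < ?N" for k m
    using W that by simp
  have ab: "?a k < ?dA" "?c k < ?dB" for k using restr_bound by auto
  have dA: "(\<Sum>x<?dA. UA $$ (i,x) * cnj (UA $$ (j,x))) = (if i = j then 1 else 0)"
    if "i < ?dA" "j < ?dA" for i j using unitary_entries[OF UA that] .
  have dB: "(\<Sum>x<?dB. UB $$ (i,x) * cnj (UB $$ (j,x))) = (if i = j then 1 else 0)"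
    if "i < ?dB" "j < ?dB" for i j using unitary_entries[OF UB that] .
  show "W * mat_adjoint W = 1\<^sub>m ?N"
  proof (rule eq_matI)
    fix k l assume "k < dim_row (1\<^sub>m ?N)" "l < dim_col (1\<^sub>m ?N)"
    then have kl: "k < ?N" "l < ?N" by auto
    have "(W * mat_adjoint W) $$ (k,l) = (\<Sum>m<?N. W $$ (k,m) * cnj (W $$ (l,m)))"
      by (rule mult_adj_entry[OF Wc Wc kl])
    also have "\<dots> = (\<Sum>m<?N. (\<lambda>x y. UA $$ (?a k, x) * UB $$ (?c k, y) * cnj (UA $$ (?a l, x) * UB $$ (?c l, y))) (?a m) (?c m))"
      using kl by (intro sum.cong) (auto simp: Wi)
    also have "\<dots> = (\<Sum>x<?dA. \<Sum>y<?dB. UA $$ (?a k, x) * UB $$ (?c k, y) * cnj (UA $$ (?a l, x) * UB $$ (?c l, y)))"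
      by (rule restr_reindex[OF X])
    also have "\<dots> = (\<Sum>x<?dA. UA $$ (?a k, x) * cnj (UA $$ (?a l, x))) * (\<Sum>y<?dB. UB $$ (?c k, y) * cnj (UB $$ (?c l, y)))"
      by (simp add: sum_product algebra_simps)
    also have "\<dots> = (if ?a k = ?a l then 1 else 0) * (if ?c k = ?c l then 1 else 0)"
      using dA[OF ab(1) ab(1)] dB[OF ab(2) ab(2)] by simp
    also have "\<dots> = 1\<^sub>m ?N $$ (k,l)"
      using restr_inj[OF X kl] kl by auto
    finally show "(W * mat_adjoint W) $$ (k,l) = 1\<^sub>m ?N $$ (k,l)" .
  qed (use Wc adj_carrier[OF Wc] in auto)
  let ?D = "mat ?N ?N (\<lambda>(i,j). if i = j then complex_of_real (real (?a i) * eA + real (?c i) * eB) else 0)"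
  show "kron_sum n X HA HB = W * ?D * mat_adjoint W"
  proof (rule eq_matI)
    fix k l assume "k < dim_row (W * ?D * mat_adjoint W)" "l < dim_col (W * ?D * mat_adjoint W)"
    then have kl: "k < ?N" "l < ?N" using Wc adj_carrier[OF Wc] by auto
    have HAe: "HA $$ (i,j) = (\<Sum>x<?dA. UA $$ (i,x) * complex_of_real (real x * eA) * cnj (UA $$ (j,x)))"
      if "i < ?dA" "j < ?dA" for i j unfolding HA by (rule sandwich_entry[OF UA(1) UA(1) that])
    have HBe: "HB $$ (i,j) = (\<Sum>y<?dB. UB $$ (i,y) * complex_of_real (real y * eB) * cnj (UB $$ (j,y)))"
      if "i < ?dB" "j < ?dB" for i j unfolding HB by (rule sandwich_entry[OF UB(1) UB(1) that])
    have "(W * ?D * mat_adjoint W) $$ (k,l) = (\<Sum>m<?N. W $$ (k,m) * complex_of_real (real (?a m) * eA + real (?c m) * eB) * cnj (W $$ (l,m)))"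
      by (rule sandwich_entry[OF Wc Wc kl])
    also have "\<dots> = (\<Sum>m<?N. (\<lambda>x y. UA $$ (?a k, x) * UB $$ (?c k, y) * complex_of_real (real x * eA + real y * eB) * cnj (UA $$ (?a l, x) * UB $$ (?c l, y))) (?a m) (?c m))"
      using kl by (intro sum.cong) (auto simp: Wi)
    also have "\<dots> = (\<Sum>x<?dA. \<Sum>y<?dB. UA $$ (?a k, x) * UB $$ (?c k, y) * complex_of_real (real x * eA + real y * eB) * cnj (UA $$ (?a l, x) * UB $$ (?c l, y)))"
      by (rule restr_reindex[OF X])
    also have "\<dots> = (\<Sum>x<?dA. \<Sum>y<?dB.
         (UA $$ (?a k, x) * complex_of_real (real x * eA) * cnj (UA $$ (?a l, x))) * (UB $$ (?c k, y) * cnj (UB $$ (?c l, y)))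
       + (UA $$ (?a k, x) * cnj (UA $$ (?a l, x))) * (UB $$ (?c k, y) * complex_of_real (real y * eB) * cnj (UB $$ (?c l, y))))"
      by (intro sum.cong refl) (simp add: algebra_simps)
    also have "\<dots> = (\<Sum>x<?dA. UA $$ (?a k, x) * complex_of_real (real x * eA) * cnj (UA $$ (?a l, x))) * (\<Sum>y<?dB. UB $$ (?c k, y) * cnj (UB $$ (?c l, y)))
       + (\<Sum>x<?dA. UA $$ (?a k, x) * cnj (UA $$ (?a l, x))) * (\<Sum>y<?dB. UB $$ (?c k, y) * complex_of_real (real y * eB) * cnj (UB $$ (?c l, y)))"
      by (simp add: sum.distrib sum_product)
    also have "\<dots> = HA $$ (?a k, ?a l) * (if ?c k = ?c l then 1 else 0) + (if ?a k = ?a l then 1 else 0) * HB $$ (?c k, ?c l)"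
      using dA[OF ab(1) ab(1)] dB[OF ab(2) ab(2)] HAe[OF ab(1) ab(1)] HBe[OF ab(2) ab(2)] by simp
    also have "\<dots> = kron_sum n X HA HB $$ (k,l)"
      unfolding kron_sum_def using kl by simp
    finally show "kron_sum n X HA HB $$ (k,l) = (W * ?D * mat_adjoint W) $$ (k,l)" by simp
  qed (use Wc adj_carrier[OF Wc] in \<open>auto simp: kron_sum_def\<close>)
qed



lemma sort_first:
  fixes xs :: "real list"
  assumes "\<forall>x\<in>set xs. m \<le> x" "m \<in> set xs"
  shows "sort xs ! 0 = m"
proof -
  let ?L = "sort xs"
  have ne: "length ?L > 0" using assms(2) by (cases xs) auto
  have "?L ! 0 \<in> set ?L" using ne by (rule nth_mem)
  then have "?L ! 0 \<in> set xs" by simp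
  then have "m \<le> ?L ! 0" using assms by auto
  moreover obtain i where i: "i < length ?L" "?L ! i = m" using assms(2)
    by (metis in_set_conv_nth set_sort)
  then have "?L ! 0 \<le> ?L ! i" using sorted_nth_mono[OF sorted_sort[of xs]] by blast
  then have "?L ! 0 \<le> m" using i by simp
  ultimately show ?thesis by simp
qed

lemma sort_last:
  fixes xs :: "real list"
  assumes "\<forall>x\<in>set xs. x \<le> m" "m \<in> set xs"
  shows "sort xs ! (length xs - 1) = m"
proof -
  let ?L = "sort xs"
  have ne: "length ?L > 0" using assms(2) by (cases xs) auto
  have "length xs - 1 < length ?L" using ne by simp
  then have "?L ! (length xs - 1) \<in> set ?L" by (rule nth_mem)
  then have "?L ! (length xs - 1) \<in> set xs" by simp
  then have "?L ! (length xs - 1) \<le> m" using assms by auto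
  moreover obtain i where i: "i < length ?L" "?L ! i = m" using assms(2)
    by (metis in_set_conv_nth set_sort)
  have "i \<le> length xs - 1" using i(1) by simp
  then have "?L ! i \<le> ?L ! (length xs - 1)"
    using sorted_nth_mono[OF sorted_sort[of xs]] \<open>length xs - 1 < length ?L\<close> by blast
  then have "m \<le> ?L ! (length xs - 1)" using i by simp
  ultimately show ?thesis by simp
qed

lemma restr_zero: "restr X 0 = 0"
  unfolding restr_def qbit_def by simp

lemma eigs_equi:
  assumes "equispaced_ham d e H" "e \<ge> 0"
  shows "eigs H = map (\<lambda>i. real i * e) [0..<d]"
proof -
  obtain U where U: "unitary_mat d U"
    "H = U * mat d d (\<lambda>(i,j). if i = j then complex_of_real (real i * e) else 0) * mat_adjoint U"
    using assms(1) unfolding equispaced_ham_def by blast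
  have "eigs H = sort (map (\<lambda>i. real i * e) [0..<d])"
    by (rule eigs_diag_similar[OF _ _ U(2)]) (use U(1) in \<open>auto simp: unitary_mat_def\<close>)
  then show ?thesis using sorted_lin[OF assms(2)] by simp
qed

lemma equi_carrier:
  assumes "equispaced_ham d e H" shows "H \<in> carrier_mat d d"
proof -
  obtain U where U: "unitary_mat d U"
    "H = U * mat d d (\<lambda>(i,j). if i = j then complex_of_real (real i * e) else 0) * mat_adjoint U"
    using assms(1) unfolding equispaced_ham_def by blast
  show ?thesis unfolding U(2) using U(1) adj_carrier[of U d] unfolding unitary_mat_def
    by (meson mult_carrier_mat mat_carrier)
qed

lemma gap_X:
  assumes d: "dim_vec psi = 2 ^ n" and nrm: "(\<Sum>k<2^n. (cmod (psi $ k))\<^sup>2) = 1"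
    and X: "X \<subseteq> {0..<n}" and eA: "eA > 0" and eB: "eB > 0"
    and hA: "equispaced_ham (2 ^ card X) eA (HA X)"
    and hB: "equispaced_ham (2 ^ card (compl_q n X)) eB (HB X)"
  shows "cap_gap n psi HA HB X = 2 * ergo_gap n psi HA HB X"
proof (cases "X = {} \<or> X = {0..<n}")
  case True then show ?thesis unfolding cap_gap_def ergo_gap_def by simp
next
  case False
  let ?C = "compl_q n X"
  let ?dA = "2^card X :: nat" and ?dB = "2^card (compl_q n X) :: nat" and ?N = "2^n :: nat"
  define PA where "PA = passive_energy (reduced n psi X) (HA X)"
  define PB where "PB = passive_energy (reduced n psi ?C) (HB X)"
  have capA: "battery_capacity (reduced n psi X) (HA X) = eA * (real ?dA - 1) - 2 * PA"
    unfolding PA_def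
    by (rule capacity_formula[OF reduced_carrier reduced_trace_one[OF X nrm] eigs_equi[OF hA]]) (use eA in simp)
  have capB: "battery_capacity (reduced n psi ?C) (HB X) = eB * (real ?dB - 1) - 2 * PB"
    unfolding PB_def
    by (rule capacity_formula[OF reduced_carrier reduced_trace_one[OF compl_sub nrm] eigs_equi[OF hB]]) (use eB in simp)
  obtain UA where UA: "unitary_mat ?dA UA"
    "HA X = UA * mat ?dA ?dA (\<lambda>(i,j). if i = j then complex_of_real (real i * eA) else 0) * mat_adjoint UA"
    using hA unfolding equispaced_ham_def by blast
  obtain UB where UB: "unitary_mat ?dB UB"
    "HB X = UB * mat ?dB ?dB (\<lambda>(i,j). if i = j then complex_of_real (real i * eB) else 0) * mat_adjoint UB"
    using hB unfolding equispaced_ham_def by blast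
  define W where "W = mat ?N ?N (\<lambda>(k,m). UA $$ (restr X k, restr X m) * UB $$ (restr ?C k, restr ?C m))"
  define f where "f = (\<lambda>i. real (restr X i) * eA + real (restr ?C i) * eB)"
  have kd: "W * mat_adjoint W = 1\<^sub>m ?N"
       "kron_sum n X (HA X) (HB X) = W * mat ?N ?N (\<lambda>(i,j). if i = j then complex_of_real (f i) else 0) * mat_adjoint W"
    using kron_decomp[OF X _ _ _ _ UA(2) UB(2) W_def] UA(1) UB(1) unfolding unitary_mat_def f_def by auto
  have eK: "eigs (kron_sum n X (HA X) (HB X)) = sort (map f [0..<?N])"
    by (rule eigs_diag_similar[OF _ kd]) (simp add: W_def)
  define M where "M = real (?dA - 1) * eA + real (?dB - 1) * eB"
  have fnn: "\<forall>x\<in>set (map f [0..<?N]). 0 \<le> x" unfolding f_def using eA eB by auto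
  have f0: "0 \<in> set (map f [0..<?N])"
  proof -
    have "f 0 = 0" unfolding f_def by (simp add: restr_zero)
    moreover have "(0::nat) \<in> set [0..<?N]" by simp
    ultimately show ?thesis by (metis list.set_map imageI)
  qed
  have fM: "\<forall>x\<in>set (map f [0..<?N]). x \<le> M"
  proof
    fix x assume "x \<in> set (map f [0..<?N])"
    then obtain m where x: "x = f m" by auto
    have "restr X m \<le> ?dA - 1" "restr ?C m \<le> ?dB - 1" using restr_bound[of X m] restr_bound[of ?C m] by auto
    then have r: "real (restr X m) \<le> real (?dA - 1)" "real (restr ?C m) \<le> real (?dB - 1)"
      by (simp_all only: of_nat_le_iff)
    have "real (restr X m) * eA \<le> real (?dA - 1) * eA"
      by (rule mult_right_mono[OF r(1)]) (use eA in simp)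
    moreover have "real (restr ?C m) * eB \<le> real (?dB - 1) * eB"
      by (rule mult_right_mono[OF r(2)]) (use eB in simp)
    ultimately show "x \<le> M" unfolding x f_def M_def by linarith
  qed
  have Min: "M \<in> set (map f [0..<?N])"
  proof -
    have "(?dA - 1, ?dB - 1) \<in> {..<?dA} \<times> {..<?dB}" by simp
    then have "(?dA - 1, ?dB - 1) \<in> (\<lambda>k. (restr X k, restr ?C k)) ` {..<?N}"
      using restr_bij[OF X] unfolding bij_betw_def by simp
    then obtain m where m: "m < ?N" "(restr X m, restr ?C m) = (?dA - 1, ?dB - 1)"
      by auto
    then have "f m = M" unfolding f_def M_def by simp
    moreover have "m \<in> set [0..<?N]" using m(1) by simp
    ultimately show ?thesis by (metis list.set_map imageI)
  qed
  have lo: "eigs (kron_sum n X (HA X) (HB X)) ! 0 = 0" unfolding eK by (rule sort_first[OF fnn f0])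
  have hi: "eigs (kron_sum n X (HA X) (HB X)) ! (?N - 1) = M" unfolding eK
    using sort_last[OF fM Min] by simp
  have capP: "battery_capacity (pure_dm psi) (kron_sum n X (HA X) (HB X)) = M"
    using pure_capacity[OF d nrm, of "kron_sum n X (HA X) (HB X)"] lo hi by simp
  have dA1: "real (?dA - 1) = real ?dA - 1" "real (?dB - 1) = real ?dB - 1"
    by (simp_all add: of_nat_diff)
  show ?thesis using False unfolding cap_gap_def ergo_gap_def capP capA capB
    PA_def[symmetric] PB_def[symmetric] M_def dA1 by (simp add: algebra_simps)
qed

theorem theorem1:
  fixes n :: nat and psi :: "complex vec" and s :: "nat set"
    and HA HB :: "nat set \<Rightarrow> complex mat" and epsA epsB :: "nat set \<Rightarrow> real"
  assumes "dim_vec psi = 2 ^ n"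
    and "(\<Sum>k<2^n. (cmod (psi $ k))\<^sup>2) = 1"
    and "s \<subseteq> {0..<n}"
    and "\<And>X. X \<in> Pow s \<Longrightarrow> X \<noteq> {} \<Longrightarrow> epsA X > 0 \<and> epsB X > 0"
    and "\<And>X. X \<in> Pow s \<Longrightarrow> X \<noteq> {} \<Longrightarrow> equispaced_ham (2 ^ card X) (epsA X) (HA X)"
    and "\<And>X. X \<in> Pow s \<Longrightarrow> X \<noteq> {} \<Longrightarrow>
           equispaced_ham (2 ^ card (compl_q n X)) (epsB X) (HB X)"
  shows "M_B n psi HA HB s = 2 * M_E n psi HA HB s
       \<and> (\<forall>X\<in>Pow s. X \<noteq> {} \<longrightarrow> cap_gap n psi HA HB X = 2 * ergo_gap n psi HA HB X)"
proof -
  have pt: "cap_gap n psi HA HB X = 2 * ergo_gap n psi HA HB X" if X: "X \<in> Pow s" for X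
  proof (cases "X = {}")
    case True then show ?thesis unfolding cap_gap_def ergo_gap_def by simp
  next
    case False
    have Xs: "X \<subseteq> {0..<n}" using X assms(3) by auto
    show ?thesis
      by (rule gap_X[where eA="epsA X" and eB="epsB X"])
        (use Xs assms(1,2) assms(4)[OF X False] assms(5)[OF X False] assms(6)[OF X False] in auto)
  qed
  have "M_B n psi HA HB s = (\<Sum>X\<in>Pow s. 2 * ergo_gap n psi HA HB X) / 2 ^ card s"
    unfolding M_B_def using pt by (metis (no_types, lifting) sum.cong)
  also have "\<dots> = 2 * M_E n psi HA HB s"
    unfolding M_E_def by (simp add: sum_distrib_left[symmetric])
  finally show ?thesis using pt by blast
qed

end
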